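(* Let $\lambda\in P$ and integers $a\ge2$, $b\ge1$, $d\ge1$, $m\ge1$. (i) If $\lambda$ has a neighborhood of type $(a+d,b)$, then $\lambda$ has $d+1$ neighborhoods of type $(a,b)$. (ii) If $\lambda$ has a neighborhood of type $(m(a-1)+1,mb)$, then $\lambda$ has a neighborhood of type $(a,b)$.
   Context: Let $P=\mathbb Z^n$. For $\lambda\in P$, $\rho(\lambda)$ is the unique permutation of $(\frac{n-1}2,\frac{n-3}2,\dots,-\frac{n-1}2)$ with $\rho(\lambda)_i>\rho(\lambda)_j$ iff $\lambda_i>\lambda_j$ or ($\lambda_i=\lambda_j$ and $i<j$). For integers $a\ge2,b\ge1$, an ordered pair $(i,j)$ of indices is a neighborhood of type $(a,b)$ in $\lambda$ if $\rho(\lambda)_i-\rho(\lambda)_j=a-1$ and either $\lambda_i-\lambda_j\le b-1$, or $\lambda_i-\lambda_j=b$ and $j<i$. (Distinct pairs count as distinct neighborhoods.) *)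

theory Defs
  imports Complex_Main
begin

text \<open>A weight lambda in P = Z^n is an integer list of length n; indices are 0..n-1.\<close>

definition pos :: "int list \<Rightarrow> nat \<Rightarrow> nat" where
  "pos lam i = card {j. j < length lam \<and> (lam!j > lam!i \<or> (lam!j = lam!i \<and> j < i))}"

text \<open>rho(lambda)_i: the entry of ((n-1)/2, (n-3)/2, ..., -(n-1)/2) placed at index i.\<close>
definition rho :: "int list \<Rightarrow> nat \<Rightarrow> real" where
  "rho lam i = (real (length lam) - 1) / 2 - real (pos lam i)"

definition nbhd :: "int list \<Rightarrow> int \<Rightarrow> int \<Rightarrow> nat \<times> nat \<Rightarrow> bool" where
  "nbhd lam a b p = (case p of (i, j) \<Rightarrow>
     i < length lam \<and> j < length lam \<and>
     rho lam i - rho lam j = of_int (a - 1) \<and>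
     (lam!i - lam!j \<le> b - 1 \<or> (lam!i - lam!j = b \<and> j < i)))"

definition nbhds :: "int list \<Rightarrow> int \<Rightarrow> int \<Rightarrow> (nat \<times> nat) set" where
  "nbhds lam a b = {p. nbhd lam a b p}"

end

theory Submission
  imports Defs
begin

definition prec :: "int list \<Rightarrow> nat \<Rightarrow> nat \<Rightarrow> bool" where
  "prec lam i j = (lam!i > lam!j \<or> (lam!i = lam!j \<and> i < j))"

definition cnd :: "int list \<Rightarrow> int \<Rightarrow> nat \<Rightarrow> nat \<Rightarrow> bool" where
  "cnd lam b i j = (lam!i - lam!j \<le> b - 1 \<or> (lam!i - lam!j = b \<and> j < i))"

lemma pos_alt: "pos lam i = card {j. j < length lam \<and> prec lam j i}"
  unfolding pos_def prec_def by simp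

lemma pos_lt_n: assumes "i < length lam" shows "pos lam i < length lam"
proof -
  have "{j. j < length lam \<and> prec lam j i} \<subseteq> {0..<length lam} - {i}"
    by (auto simp: prec_def)
  hence "card {j. j < length lam \<and> prec lam j i} \<le> card ({0..<length lam} - {i})"
    by (intro card_mono) auto
  also have "\<dots> = length lam - 1" using assms by simp
  finally show ?thesis using assms unfolding pos_alt by linarith
qed

lemma pos_lt_if: assumes "i < length lam" "j < length lam" "prec lam i j"
  shows "pos lam i < pos lam j"
proof -
  have "{k. k < length lam \<and> prec lam k i} \<subset> {k. k < length lam \<and> prec lam k j}"
    using assms by (auto simp: prec_def)
  thus ?thesis unfolding pos_alt by (intro psubset_card_mono) auto
qed

lemma pos_lt_iff: assumes "i < length lam" "j < length lam"
  shows "pos lam i < pos lam j \<longleftrightarrow> prec lam i j"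
proof
  assume h: "pos lam i < pos lam j"
  show "prec lam i j"
  proof (rule ccontr)
    assume "\<not> prec lam i j"
    hence "i = j \<or> prec lam j i" unfolding prec_def by auto
    thus False using h pos_lt_if[OF assms(2,1)] by auto
  qed
qed (use pos_lt_if assms in auto)

lemma pos_inj: "inj_on (pos lam) {0..<length lam}"
proof (rule inj_onI)
  fix i j assume "i \<in> {0..<length lam}" "j \<in> {0..<length lam}" "pos lam i = pos lam j"
  thus "i = j" using pos_lt_if[of i lam j] pos_lt_if[of j lam i]
    unfolding prec_def by (cases "i = j") (auto, linarith+)
qed

lemma pos_img: "pos lam ` {0..<length lam} = {0..<length lam}"
proof -
  have "pos lam ` {0..<length lam} \<subseteq> {0..<length lam}" using pos_lt_n by auto
  moreover have "card (pos lam ` {0..<length lam}) = card {0..<length lam}"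
    using card_image[OF pos_inj] by simp
  ultimately show ?thesis by (intro card_subset_eq) auto
qed

definition idx :: "int list \<Rightarrow> nat \<Rightarrow> nat" where
  "idx lam k = the_inv_into {0..<length lam} (pos lam) k"

lemma idx_lt: "k < length lam \<Longrightarrow> idx lam k < length lam"
  unfolding idx_def using the_inv_into_into[OF pos_inj, of k lam "{0..<length lam}"] pos_img by auto

lemma pos_idx: "k < length lam \<Longrightarrow> pos lam (idx lam k) = k"
  unfolding idx_def using f_the_inv_into_f[OF pos_inj, of k] pos_img by auto

lemma idx_pos: "i < length lam \<Longrightarrow> idx lam (pos lam i) = i"
  unfolding idx_def using the_inv_into_f_f[OF pos_inj, of i] by auto

lemma idx_lt_prec: assumes "k < l" "l < length lam"
  shows "prec lam (idx lam k) (idx lam l)"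
  using pos_lt_iff[of "idx lam k" lam "idx lam l"] assms idx_lt pos_idx by auto

lemma idx_mono: assumes "k \<le> l" "l < length lam"
  shows "lam!(idx lam l) \<le> lam!(idx lam k)"
    "lam!(idx lam l) = lam!(idx lam k) \<Longrightarrow> idx lam k \<le> idx lam l"
  using idx_lt_prec[of k l lam] assms unfolding prec_def
  by (cases "k = l"; force)+

lemma sub_cnd: assumes "p \<le> p'" "p' \<le> q'" "q' \<le> q" "q < length lam"
  and "cnd lam b (idx lam p) (idx lam q)"
  shows "cnd lam b (idx lam p') (idx lam q')"
proof -
  have m1: "lam!(idx lam p') \<le> lam!(idx lam p)" using idx_mono assms by auto
  have m2: "lam!(idx lam q) \<le> lam!(idx lam q')" using idx_mono assms by auto
  have t1: "lam!(idx lam p') = lam!(idx lam p) \<Longrightarrow> idx lam p \<le> idx lam p'"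
    using idx_mono assms by auto
  have t2: "lam!(idx lam q) = lam!(idx lam q') \<Longrightarrow> idx lam q' \<le> idx lam q"
    using idx_mono assms by auto
  show ?thesis using assms(5) m1 m2 t1 t2 unfolding cnd_def by force
qed

lemma nbhd_iff: "nbhd lam a b (i, j) \<longleftrightarrow> i < length lam \<and> j < length lam \<and>
   int (pos lam j) = int (pos lam i) + (a - 1) \<and> cnd lam b i j"
proof -
  have "rho lam i - rho lam j = real (pos lam j) - real (pos lam i)" unfolding rho_def by simp
  hence "(rho lam i - rho lam j = of_int (a - 1)) = (int (pos lam j) = int (pos lam i) + (a - 1))"
    by linarith
  thus ?thesis unfolding nbhd_def cnd_def by auto
qed

lemma nbhd_idx: assumes "p + N < length lam" "int N = a - 1" "cnd lam b (idx lam p) (idx lam (p + N))"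
  shows "nbhd lam a b (idx lam p, idx lam (p + N))"
  using assms idx_lt pos_idx unfolding nbhd_iff by auto

lemma chain: "M \<ge> 1 \<Longrightarrow> p + M * N < length lam \<Longrightarrow> cnd lam (int M * b) (idx lam p) (idx lam (p + M * N))
   \<Longrightarrow> \<exists>k<M. cnd lam b (idx lam (p + k * N)) (idx lam (p + k * N + N))"
proof (induction M arbitrary: p)
  case 0 then show ?case by simp
next
  case (Suc M)
  show ?case
  proof (cases "M = 0")
    case True then show ?thesis using Suc.prems by auto
  next
    case False
    show ?thesis
    proof (cases "cnd lam b (idx lam p) (idx lam (p + N))")
      case True then show ?thesis by (intro exI[of _ 0]) auto
    next
      case nc: False
      have e: "p + Suc M * N = (p + N) + M * N" by simp
      have m1: "lam!(idx lam (p+N)) \<le> lam!(idx lam p)" using idx_mono Suc.prems by auto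
      have "cnd lam (int M * b) (idx lam (p+N)) (idx lam ((p + N) + M * N))"
        using Suc.prems(3) nc m1 unfolding e cnd_def by (auto simp: algebra_simps)
      from Suc.IH[OF _ _ this] False Suc.prems(2) obtain k where
        "k < M" "cnd lam b (idx lam (p + N + k * N)) (idx lam (p + N + k * N + N))"
        unfolding e by auto
      thus ?thesis by (intro exI[of _ "Suc k"]) (auto simp: algebra_simps)
    qed
  qed
qed

theorem lemma4p2:
  fixes lam :: "int list" and a b d m :: int
  assumes "a \<ge> 2" and "b \<ge> 1" and "d \<ge> 1" and "m \<ge> 1"
  shows "(nbhds lam (a + d) b \<noteq> {} \<longrightarrow> int (card (nbhds lam a b)) \<ge> d + 1)
       \<and> (nbhds lam (m * (a - 1) + 1) (m * b) \<noteq> {} \<longrightarrow> nbhds lam a b \<noteq> {})"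
proof (intro conjI impI)
  define N where "N = nat (a - 1)"
  have N: "int N = a - 1" using assms unfolding N_def by simp
  {
    assume "nbhds lam (a + d) b \<noteq> {}"
    then obtain i j where ij: "nbhd lam (a + d) b (i, j)" unfolding nbhds_def by auto
    define D where "D = nat d"
    have D: "int D = d" using assms unfolding D_def by simp
    define p where "p = pos lam i"
    have ij': "i < length lam" "j < length lam" "pos lam j = p + N + D" "cnd lam b i j"
      using ij N D unfolding nbhd_iff p_def by auto
    have c0: "cnd lam b (idx lam p) (idx lam (p + N + D))"
      using idx_pos[OF ij'(1)] idx_pos[OF ij'(2)] ij'(3,4) unfolding p_def by simp
    have qn: "p + N + D < length lam" using pos_lt_n[OF ij'(2)] ij'(3) by simp
    let ?f = "\<lambda>k. (idx lam (p + k), idx lam (p + k + N))"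
    have sub: "?f ` {0..D} \<subseteq> nbhds lam a b"
    proof
      fix x assume "x \<in> ?f ` {0..D}"
      then obtain k where k: "k \<le> D" "x = ?f k" by auto
      have "cnd lam b (idx lam (p + k)) (idx lam (p + k + N))"
        by (rule sub_cnd[OF _ _ _ qn c0]) (use k in auto)
      thus "x \<in> nbhds lam a b" unfolding nbhds_def using nbhd_idx[OF _ N] k qn by auto
    qed
    have inj: "inj_on ?f {0..D}"
    proof (rule inj_onI)
      fix k l assume "k \<in> {0..D}" "l \<in> {0..D}" "?f k = ?f l"
      hence "pos lam (idx lam (p + k)) = pos lam (idx lam (p + l))" "p + k < length lam" "p + l < length lam"
        using qn by auto
      thus "k = l" using pos_idx[of "p+k" lam] pos_idx[of "p+l" lam] by simp
    qed
    have fin: "finite (nbhds lam a b)"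
      by (rule finite_subset[of _ "{0..<length lam} \<times> {0..<length lam}"])
         (auto simp: nbhds_def nbhd_def)
    have "card (?f ` {0..D}) \<le> card (nbhds lam a b)" using card_mono[OF fin sub] .
    hence "D + 1 \<le> card (nbhds lam a b)" using card_image[OF inj] by simp
    thus "int (card (nbhds lam a b)) \<ge> d + 1" using D by linarith
  }
  {
    assume "nbhds lam (m * (a - 1) + 1) (m * b) \<noteq> {}"
    then obtain i j where ij: "nbhd lam (m * (a - 1) + 1) (m * b) (i, j)" unfolding nbhds_def by auto
    define M where "M = nat m"
    have M: "int M = m" "M \<ge> 1" using assms unfolding M_def by auto
    define p where "p = pos lam i"
    have "int (pos lam j) = int p + int M * int N" using ij M N unfolding nbhd_iff p_def by auto
    hence pj: "pos lam j = p + M * N" by (simp only: of_nat_mult[symmetric] of_nat_add[symmetric] of_nat_eq_iff)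
    have ij': "i < length lam" "j < length lam" "cnd lam (int M * b) i j"
      using ij M unfolding nbhd_iff by auto
    have c0: "cnd lam (int M * b) (idx lam p) (idx lam (p + M * N))"
      using idx_pos[OF ij'(1)] idx_pos[OF ij'(2)] ij'(3) pj unfolding p_def by simp
    have qn: "p + M * N < length lam" using pos_lt_n[OF ij'(2)] pj by simp
    obtain k where k: "k < M" "cnd lam b (idx lam (p + k * N)) (idx lam (p + k * N + N))"
      using chain[OF M(2) qn c0] by auto
    have "p + k * N + N \<le> p + M * N"
      using k(1) mult_le_mono1[of "Suc k" M N] by simp
    hence "nbhd lam a b (idx lam (p + k * N), idx lam (p + k * N + N))"
      using nbhd_idx[OF _ N k(2)] qn by auto
    thus "nbhds lam a b \<noteq> {}" unfolding nbhds_def by auto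
  }
qed

end
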